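(* Let $X$ be a metric space. The following are equivalent: (1) $X$ is hereditarily Baire; (2) every Borel 1 function $f\colon X\to\mathbb R$ has (PCP).
   Context: A topological space is Baire if every nonempty open subset of it is nonmeager in it; it is hereditarily Baire if every nonempty closed subspace is Baire. $f\colon X\to\mathbb R$ is Borel 1 if $f^{-1}(V)$ is $F_\sigma$ for every open $V\subseteq\mathbb R$; it has (PCP) if for every nonempty closed $F\subseteq X$ the restriction $f|_F$ has a point of continuity. *)

theory Defs
  imports "HOL-Analysis.Analysis"
begin

definition nowhere_dense_in :: "'a topology \<Rightarrow> 'a set \<Rightarrow> bool" where
  "nowhere_dense_in X S \<longleftrightarrow> S \<subseteq> topspace X \<and> X interior_of (X closure_of S) = {}"

definition meager_in :: "'a topology \<Rightarrow> 'a set \<Rightarrow> bool" where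
  "meager_in X S \<longleftrightarrow> (countable union_of nowhere_dense_in X) S"

definition baire_space :: "'a topology \<Rightarrow> bool" where
  "baire_space X \<longleftrightarrow> (\<forall>U. openin X U \<and> U \<noteq> {} \<longrightarrow> \<not> meager_in X U)"

definition hereditarily_baire :: "'a topology \<Rightarrow> bool" where
  "hereditarily_baire X \<longleftrightarrow> (\<forall>F. closedin X F \<and> F \<noteq> {} \<longrightarrow> baire_space (subtopology X F))"

definition borel1 :: "('a::metric_space \<Rightarrow> real) \<Rightarrow> bool" where
  "borel1 f \<longleftrightarrow> (\<forall>V. open V \<longrightarrow> fsigma_in euclidean (f -` V))"

definition has_PCP :: "('a::metric_space \<Rightarrow> real) \<Rightarrow> bool" where
  "has_PCP f \<longleftrightarrow> (\<forall>F. closed F \<and> F \<noteq> {} \<longrightarrow> (\<exists>x\<in>F. continuous (at x within F) f))"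

end

theory Submission
  imports Defs
begin

lemma baire_not_cover:
  assumes "baire_space Y" "topspace Y \<noteq> {}" "countable B" "\<And>b. b \<in> B \<Longrightarrow> nowhere_dense_in Y b"
  shows "\<exists>x \<in> topspace Y. x \<notin> \<Union>B"
proof (rule ccontr)
  assume "\<not> ?thesis"
  then have "topspace Y \<subseteq> \<Union>B" by auto
  moreover have "\<Union>B \<subseteq> topspace Y" using assms(4) unfolding nowhere_dense_in_def by auto
  ultimately have "\<Union>B = topspace Y" by auto
  then have "meager_in Y (topspace Y)" unfolding meager_in_def union_of_def using assms(3,4) by auto
  then show False using assms(1,2) unfolding baire_space_def by auto
qed

lemma nowhere_dense_boundary:
  assumes "closedin Y A"
  shows "nowhere_dense_in Y (A - Y interior_of A)"
proof -
  have cl: "closedin Y (A - Y interior_of A)"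
    using assms by (simp add: closedin_diff)
  have "Y interior_of (A - Y interior_of A) = {}"
  proof -
    have "Y interior_of (A - Y interior_of A) \<subseteq> Y interior_of A"
      by (simp add: interior_of_mono)
    moreover have "Y interior_of (A - Y interior_of A) \<subseteq> A - Y interior_of A"
      by (simp add: interior_of_subset)
    ultimately show ?thesis by auto
  qed
  then show ?thesis unfolding nowhere_dense_in_def using cl closure_of_closedin closedin_subset by metis
qed

lemma dir1:
  fixes f :: "'a::metric_space \<Rightarrow> real"
  assumes hb: "hereditarily_baire (euclidean :: 'a topology)" and bf: "borel1 f"
  shows "has_PCP f"
  unfolding has_PCP_def
proof (intro allI impI)
  fix F :: "'a set" assume FF: "closed F \<and> F \<noteq> {}"
  define Y where "Y = subtopology euclidean F"
  have bY: "baire_space Y" using hb FF closed_closedin unfolding hereditarily_baire_def Y_def by blast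
  have tY: "topspace Y = F" unfolding Y_def by simp
  define P where "P = (\<lambda>(pq::rat\<times>rat) \<C>. countable \<C> \<and> (\<forall>c\<in>\<C>. closedin euclidean c) \<and>
          \<Union>\<C> = f -` {real_of_rat (fst pq)<..<real_of_rat (snd pq)})"
  have ex: "\<exists>\<C>. P pq \<C>" for pq
  proof -
    have "open {real_of_rat (fst pq)<..<real_of_rat (snd pq)}" by (rule open_greaterThanLessThan)
    then have "fsigma_in euclidean (f -` {real_of_rat (fst pq)<..<real_of_rat (snd pq)})"
      using bf unfolding borel1_def by blast
    then show ?thesis unfolding P_def fsigma_in_def union_of_def by (fastforce simp: subset_iff)
  qed
  define C where "C = (\<lambda>pq. SOME \<C>. P pq \<C>)"
  have PC: "P pq (C pq)" for pq unfolding C_def using someI_ex[OF ex] .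
  have C: "\<And>pq. countable (C pq)" "\<And>pq c. c \<in> C pq \<Longrightarrow> closedin euclidean c"
     "\<And>pq. \<Union>(C pq) = f -` {real_of_rat (fst pq)<..<real_of_rat (snd pq)}"
    using PC unfolding P_def by auto
  define B where "B = (\<Union>pq. (\<lambda>c. (F \<inter> c) - Y interior_of (F \<inter> c)) ` C pq)"
  have cB: "countable B" unfolding B_def by (simp add: C(1))
  moreover have "\<And>b. b \<in> B \<Longrightarrow> nowhere_dense_in Y b"
  proof -
    fix b assume "b \<in> B"
    then obtain pq c where "c \<in> C pq" "b = (F \<inter> c) - Y interior_of (F \<inter> c)" unfolding B_def by auto
    moreover have "closedin Y (F \<inter> c)" if "c \<in> C pq" for c
      using C(2)[OF that] unfolding Y_def by (simp add: closedin_subtopology_Int_closed)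
    ultimately show "nowhere_dense_in Y b" using nowhere_dense_boundary by metis
  qed
  ultimately obtain x where x: "x \<in> F" "x \<notin> \<Union>B" using baire_not_cover[OF bY _ cB] tY FF by auto
  have "continuous (at x within F) f"
    unfolding continuous_within_eps_delta
  proof (intro allI impI)
    fix e :: real assume e: "e > 0"
    obtain p where p: "f x - e < of_rat p" "of_rat p < f x" using of_rat_dense[of "f x - e" "f x"] e by auto
    obtain q where q: "f x < of_rat q" "of_rat q < f x + e" using of_rat_dense[of "f x" "f x + e"] e by auto
    have "x \<in> \<Union>(C (p,q))" using C(3)[of "(p,q)"] p q by auto
    then obtain c where c: "c \<in> C (p,q)" "x \<in> c" by auto
    have "(F \<inter> c) - Y interior_of (F \<inter> c) \<in> B" unfolding B_def using c(1) by blast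
    then have "x \<notin> (F \<inter> c) - Y interior_of (F \<inter> c)" using x(2) by blast
    then have "x \<in> Y interior_of (F \<inter> c)" using x(1) c(2) by blast
    have oY: "openin (top_of_set F) (Y interior_of (F \<inter> c))" unfolding Y_def by (rule openin_interior_of)
    have "\<exists>T. openin euclidean T \<and> Y interior_of (F \<inter> c) = T \<inter> F" using oY by (simp only: openin_subtopology)
    then obtain T where T0: "openin euclidean T" "Y interior_of (F \<inter> c) = T \<inter> F" by blast
    have T: "open T" "Y interior_of (F \<inter> c) = T \<inter> F" "x \<in> T"
      using T0(1) apply simp
      using T0(2) apply simp
      using T0(2) \<open>x \<in> Y interior_of (F \<inter> c)\<close> by blast
    obtain d where d: "d > 0" "ball x d \<subseteq> T" using T(1,3) unfolding open_contains_ball by blast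
    have "\<forall>y\<in>F. dist y x < d \<longrightarrow> dist (f y) (f x) < e"
    proof (intro ballI impI)
      fix y assume y: "y \<in> F" "dist y x < d"
      then have "y \<in> ball x d" by (simp add: dist_commute)
      then have "y \<in> T" using d by blast
      then have "y \<in> Y interior_of (F \<inter> c)" using T(2) y(1) by blast
      then have "y \<in> c" using interior_of_subset[of Y "F \<inter> c"] by blast
      then have "y \<in> \<Union>(C (p,q))" using c(1) by blast
      then have "f y \<in> {real_of_rat p<..<real_of_rat q}" using C(3)[of "(p,q)"] by simp
      then show "dist (f y) (f x) < e" using p q by (simp add: dist_real_def abs_less_iff)
    qed
    then show "\<exists>d>0. \<forall>y\<in>F. dist y x < d \<longrightarrow> dist (f y) (f x) < e" using d by auto
  qed
  then show "\<exists>x\<in>F. continuous (at x within F) f" using x by auto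
qed

lemma avoid_closed:
  fixes k :: nat
  assumes Q: "openin Y Q" "Q \<noteq> {}" and C: "\<And>i. closedin Y (C i)" "\<And>i. Y interior_of (C i) = {}"
  shows "Q - \<Union>(C ` {..<k}) \<noteq> {}"
proof (induction k)
  case 0
  then show ?case using Q by simp
next
  case (Suc k)
  define W where "W = Q - \<Union>(C ` {..<k})"
  have "closedin Y (\<Union>(C ` {..<k}))" by (rule closedin_Union) (auto simp: C(1))
  then have oW: "openin Y W" unfolding W_def using Q(1) by (rule openin_diff[rotated])
  have eq: "Q - \<Union>(C ` {..<Suc k}) = W - C k" unfolding W_def lessThan_Suc by auto
  show ?case
  proof
    assume "Q - \<Union>(C ` {..<Suc k}) = {}"
    then have "W \<subseteq> C k" using eq by auto
    then have "W \<subseteq> Y interior_of (C k)" using oW by (rule interior_of_maximal)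
    then show False using C(2)[of k] Suc.IH unfolding W_def by auto
  qed
qed

lemma dir2:
  assumes H: "\<forall>f :: 'a::metric_space \<Rightarrow> real. borel1 f \<longrightarrow> has_PCP f"
  shows "hereditarily_baire (euclidean :: 'a topology)"
  unfolding hereditarily_baire_def baire_space_def
proof (intro allI impI notI)
  fix F U :: "'a set"
  assume FF: "closedin euclidean F \<and> F \<noteq> {}"
     and UU: "openin (subtopology euclidean F) U \<and> U \<noteq> {}"
     and M: "meager_in (subtopology euclidean F) U"
  define Y where "Y = subtopology euclidean F"
  have cF: "closed F" using FF by simp
  have oU: "openin Y U" and Une: "U \<noteq> {}" using UU Y_def by auto
  obtain G where G: "open G" "U = G \<inter> F" using oU unfolding Y_def openin_subtopology by auto
  obtain \<N> where N: "countable \<N>" "\<And>n. n \<in> \<N> \<Longrightarrow> nowhere_dense_in Y n" "\<Union>\<N> = U"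
    using M unfolding meager_in_def union_of_def Y_def by auto
  have Nne: "\<N> \<noteq> {}" using N(3) Une by auto
  define NN where "NN = from_nat_into \<N>"
  have rN: "range NN = \<N>" unfolding NN_def using Nne N(1) by simp
  define C where "C n = Y closure_of (NN n)" for n
  have CY: "closedin Y (C n)" for n unfolding C_def by simp
  have Cint: "Y interior_of (C n) = {}" for n
  proof -
    have "NN n \<in> \<N>" using rN by auto
    then show ?thesis using N(2) unfolding C_def nowhere_dense_in_def by auto
  qed
  have Ccl: "closed (C n)" for n using CY[of n] cF unfolding Y_def by (rule closedin_closed_trans)
  have CF: "C n \<subseteq> F" for n unfolding C_def Y_def by (rule closure_of_subset_subtopology)
  have UC: "\<exists>n. x \<in> C n" if "x \<in> U" for x
  proof -
    have "x \<in> \<Union>(range NN)" using that N(3) rN by simp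
    then obtain n where "x \<in> NN n" by blast
    moreover have "NN n \<subseteq> topspace Y" using N(2) rN unfolding nowhere_dense_in_def by auto
    ultimately show ?thesis unfolding C_def using closure_of_subset by blast
  qed
  define ix where "ix x = (LEAST n. x \<in> C n)" for x
  define f where "f x = (if x \<in> U then 1 / (real (ix x) + 1) else 2)" for x
  define L where "L n = U \<inter> C n - \<Union>(C ` {..<n})" for n
  have L_iff: "x \<in> L n \<longleftrightarrow> x \<in> U \<and> ix x = n" for x n
  proof
    assume "x \<in> L n"
    then have "x \<in> U" "x \<in> C n" "\<And>i. i < n \<Longrightarrow> x \<notin> C i" unfolding L_def by auto
    then show "x \<in> U \<and> ix x = n" unfolding ix_def by (metis (mono_tags, lifting) Least_equality not_less)
  next
    assume a: "x \<in> U \<and> ix x = n"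
    then obtain m where "x \<in> C m" using UC by blast
    then have "x \<in> C (ix x)" unfolding ix_def by (rule LeastI)
    moreover have "\<And>i. i < ix x \<Longrightarrow> x \<notin> C i" unfolding ix_def using not_less_Least by blast
    ultimately show "x \<in> L n" using a unfolding L_def by auto
  qed
  have borel: "borel1 f"
    unfolding borel1_def
  proof (intro allI impI)
    fix V :: "real set" assume "open V"
    define P where "P n = (if 1 / (real n + 1) \<in> V then L n else {})" for n
    have eq: "f -` V = (if 2 \<in> V then - U else {}) \<union> \<Union>(range P)"
    proof (rule set_eqI)
      fix x show "x \<in> f -` V \<longleftrightarrow> x \<in> (if 2 \<in> V then - U else {}) \<union> \<Union>(range P)"
      proof (cases "x \<in> U")
        case True
        then have "x \<in> L (ix x)" using L_iff by blast
        have "x \<in> \<Union>(range P) \<longleftrightarrow> 1 / (real (ix x) + 1) \<in> V"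
        proof
          assume "x \<in> \<Union>(range P)"
          then obtain n where "x \<in> P n" by blast
          then have "1 / (real n + 1) \<in> V" "x \<in> L n" unfolding P_def by (auto split: if_splits)
          then show "1 / (real (ix x) + 1) \<in> V" using L_iff[of x n] by simp
        next
          assume "1 / (real (ix x) + 1) \<in> V"
          then have "x \<in> P (ix x)" unfolding P_def using \<open>x \<in> L (ix x)\<close> by simp
          then show "x \<in> \<Union>(range P)" by blast
        qed
        then show ?thesis using True unfolding f_def by simp
      next
        case False
        then have "x \<notin> P n" for n unfolding P_def using L_iff by auto
        then show ?thesis using False unfolding f_def by auto
      qed
    qed
    have met: "metrizable_space (euclidean :: 'a topology)" by (rule metrizable_space_euclidean)
    have f1: "fsigma_in euclidean (- U)"
    proof -
      have "- U = - G \<union> - F" using G(2) by auto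
      moreover have "fsigma_in euclidean (- G)" using G(1) by (simp add: closed_imp_fsigma_in closed_Compl)
      moreover have "fsigma_in euclidean (- F)" using cF met open_imp_fsigma_in by (metis open_Compl open_openin)
      ultimately show ?thesis by (simp add: fsigma_in_Un)
    qed
    have f2: "fsigma_in euclidean (L n)" for n
    proof -
      have "L n = C n \<inter> (G - \<Union>(C ` {..<n}))" unfolding L_def using G(2) CF[of n] by auto
      moreover have "fsigma_in euclidean (C n)" using Ccl by (simp add: closed_imp_fsigma_in)
      moreover have "open (G - \<Union>(C ` {..<n}))" using G(1) Ccl by (intro open_Diff closed_Union) auto
      then have "fsigma_in euclidean (G - \<Union>(C ` {..<n}))" using met open_imp_fsigma_in by (metis open_openin)
      ultimately show ?thesis by (simp add: fsigma_in_Int)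
    qed
    have "fsigma_in euclidean (\<Union>(range P))"
      by (rule fsigma_in_Union) (auto simp: P_def f2)
    then show "fsigma_in euclidean (f -` V)" unfolding eq using f1 by (simp add: fsigma_in_Un)
  qed
  define K where "K = closure U"
  have "closed K \<and> K \<noteq> {}" unfolding K_def using Une closure_subset by auto
  then obtain x where x: "x \<in> K" "continuous (at x within K) f"
    using H borel unfolding has_PCP_def by blast
  then have ed: "\<And>e. e > 0 \<Longrightarrow> \<exists>d>0. \<forall>y\<in>K. dist y x < d \<longrightarrow> dist (f y) (f x) < e"
    unfolding continuous_within_eps_delta by blast
  show False
  proof (cases "x \<in> U")
    case False
    then have fx: "f x = 2" unfolding f_def by simp
    obtain d where d: "d > 0" "\<forall>y\<in>K. dist y x < d \<longrightarrow> dist (f y) (f x) < 1" using ed[of 1] by auto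
    obtain y where y: "y \<in> U" "dist y x < d" using x(1) d(1) unfolding K_def closure_approachable by blast
    have "y \<in> K" unfolding K_def using y(1) closure_subset by blast
    then have "dist (f y) 2 < 1" using d y fx by auto
    moreover have "f y \<le> 1" unfolding f_def using y(1) by simp
    ultimately show False by (simp add: dist_real_def)
  next
    case True
    define m where "m = ix x"
    have fx: "f x = 1 / (real m + 1)" unfolding f_def m_def using True by simp
    define e where "e = 1 / (real m + 1) - 1 / (real m + 2)"
    have e: "e > 0" unfolding e_def by (simp add: frac_less2)
    obtain d where d: "d > 0" "\<forall>y\<in>K. dist y x < d \<longrightarrow> dist (f y) (f x) < e" using ed[OF e] by auto
    have oQ: "openin Y (U \<inter> ball x d)" unfolding Y_def using oU Y_def by (simp add: openin_Int_open)
    have "U \<inter> ball x d \<noteq> {}" using True d(1) by auto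
    then have "U \<inter> ball x d - \<Union>(C ` {..<Suc m}) \<noteq> {}"
      using avoid_closed[of Y "U \<inter> ball x d" C "Suc m"] oQ CY Cint by blast
    then obtain y where y0: "y \<in> U \<inter> ball x d - \<Union>(C ` {..<Suc m})" by blast
    have y: "y \<in> U" "dist x y < d" "\<And>i. i \<le> m \<Longrightarrow> y \<notin> C i"
    proof -
      show "y \<in> U" "dist x y < d" using y0 by auto
      fix i assume "i \<le> m"
      then have "i \<in> {..<Suc m}" by simp
      then show "y \<notin> C i" using y0 by blast
    qed
    have "y \<in> L (ix y)" using L_iff y(1) by blast
    then have "y \<in> C (ix y)" unfolding L_def by auto
    then have "ix y \<ge> Suc m" using y(3) not_less_eq_eq by blast
    then have "real (ix y) + 1 \<ge> real m + 2" by simp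
    then have fy: "f y \<le> 1 / (real m + 2)" unfolding f_def using y(1) by (simp add: frac_le)
    have "y \<in> K" unfolding K_def using y(1) closure_subset by blast
    moreover have "dist y x < d" using y(2) by (simp add: dist_commute)
    ultimately have "dist (f y) (f x) < e" using d(2) by blast
    then show False using fy fx unfolding e_def by (simp add: dist_real_def)
  qed
qed

theorem corollary2p10:
  shows "hereditarily_baire (euclidean :: 'a::metric_space topology) \<longleftrightarrow>
         (\<forall>f :: 'a \<Rightarrow> real. borel1 f \<longrightarrow> has_PCP f)"
  using dir1 dir2 by blast

end
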